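(* For every $\sigma\in\mathcal A$, every $\mathbf P_{\!\sigma}=(\mathbf p_{\sigma_d},\dots,\mathbf p_{\sigma_1})\in\mathcal P^\sigma$ and every $1\le n\le d-1$, the quantity $t_\sigma(\mathbf p_{\sigma_d};\dots;\mathbf p_{\sigma_{n+1}};\mathbf p^\ast_{\sigma_n};\dots;\mathbf p^\ast_{\sigma_1})$ equals $$T_n^\sigma+\sum_{k=n+1}^dC_k^{(d),\sigma}(\mathbf P_{\!\sigma})\Big(H(\mathbf p_{\sigma_k})+\int\varphi_k^\sigma\,\mathrm d\mathbf p_{\sigma_k}-\sum_{\ell=1}^n\chi_\ell^\sigma(\mathbf p_{\sigma_k})(T_\ell^\sigma-T_{\ell-1}^\sigma)\Big),$$ and moreover $t_\sigma(\mathbf p^\ast_{\sigma_d};\dots;\mathbf p^\ast_{\sigma_1})=T_d^\sigma$.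
   Context: Setup: $d\ge1$, $\mathcal I=\{1,\dots,N\}$, affine maps with diagonal linear parts $\mathrm{diag}(a_i^{(1)},\dots,a_i^{(d)})$, $\lambda_i^{(n)}=|a_i^{(n)}|\in(0,1)$, no two distinct maps agree on $[0,1]^d$. For a permutation $\sigma$, $\Pi_n^\sigma$ is orthogonal projection onto the span of coordinate axes $\sigma_1,\dots,\sigma_n$; $f_i,f_j$ overlap exactly if $\Pi_n^\sigma f_i=\Pi_n^\sigma f_j$ on $[0,1]^d$; $\mathcal I_n^\sigma$ = smallest elements of the classes of this equivalence relation. $\mathcal A$ = set of permutations $\sigma$ for which some $\mathbf i\in\mathcal I^{\mathbb N}$, $\delta>0$ have $L_\delta(\mathbf i,\sigma_d)\le\dots\le L_\delta(\mathbf i,\sigma_1)$ (ties broken by $\sigma_n>\sigma_{n-1}$), $L_\delta(\mathbf i,n)$ the unique integer with $\prod_{\ell\le L_\delta(\mathbf i,n)}\lambda_{i_\ell}^{(n)}\le\delta<\prod_{\ell\le L_\delta(\mathbf i,n)-1}\lambda_{i_\ell}^{(n)}$. $\mathcal P_n^\sigma$ = probability vectors on $\mathcal I_n^\sigma$; $\mathcal P^\sigma=\mathcal P_d^\sigma\times\dots\times\mathcal P_1^\sigma$. $\chi_n^\sigma(\mathbf p_{\sigma_m})=-\sum_{i\in\mathcal I_m^\sigma}p_{\sigma_m}(i)\log\lambda_i^{(\sigma_n)}$ ($n\le m$); $C_d^{(d),\sigma}=1/\chi_d^\sigma(\mathbf p_{\sigma_d})$, $C_n^{(d),\sigma}=(1-\sum_{m>n}C_m^{(d),\sigma}\chi_n^\sigma(\mathbf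 p_{\sigma_m}))/\chi_n^\sigma(\mathbf p_{\sigma_n})$ (note $C_k^{(d),\sigma}(\mathbf P_{\!\sigma})$ depends only on $\mathbf p_{\sigma_m}$, $m\ge k$). Potentials $\varphi_n^\sigma:\mathcal I_n^\sigma\to\mathbb R$, $\int\varphi_n^\sigma\mathrm d\mathbf p=\sum_ip(i)\varphi_n^\sigma(i)$; $t_\sigma(\mathbf P_{\!\sigma})=\sum_{n=1}^dC_n^{(d),\sigma}(\mathbf P_{\!\sigma})(H(\mathbf p_{\sigma_n})+\int\varphi_n^\sigma\mathrm d\mathbf p_{\sigma_n})$, $H$ Shannon entropy. $T_0^\sigma=0$; $T_n^\sigma$ is the unique solution of $\sum_{i\in\mathcal I_n^\sigma}p^\ast_{\sigma_n}(i)=1$ with $p^\ast_{\sigma_n}(i)=e^{\varphi_n^\sigma(i)}\prod_{\ell=1}^n(\lambda_i^{(\sigma_\ell)})^{T_\ell^\sigma-T_{\ell-1}^\sigma}$, $\mathbf p^\ast_{\sigma_n}=(p^\ast_{\sigma_n}(i))_i$. *)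

theory Defs
  imports Complex_Main "HOL-Combinatorics.Permutations"
begin

text \<open>Index set I = {1..N}; coordinates {1..d}. The i-th map is
  f_i x = diag(a_i) x + b_i, with a i c = a_i^(c), b i c = b_i^(c).
  Points of R^d are functions nat => real, vanishing outside {1..d}.\<close>

definition lam :: "(nat \<Rightarrow> nat \<Rightarrow> real) \<Rightarrow> nat \<Rightarrow> nat \<Rightarrow> real" where
  "lam a i c = \<bar>a i c\<bar>"

definition ifs_map :: "nat \<Rightarrow> (nat \<Rightarrow> nat \<Rightarrow> real) \<Rightarrow> (nat \<Rightarrow> nat \<Rightarrow> real) \<Rightarrow> nat
    \<Rightarrow> (nat \<Rightarrow> real) \<Rightarrow> (nat \<Rightarrow> real)" where
  "ifs_map d a b i x = (\<lambda>c. if c \<in> {1..d} then a i c * x c + b i c else 0)"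

definition unit_cube :: "nat \<Rightarrow> (nat \<Rightarrow> real) set" where
  "unit_cube d = {x. \<forall>c. (c \<in> {1..d} \<longrightarrow> 0 \<le> x c \<and> x c \<le> 1) \<and> (c \<notin> {1..d} \<longrightarrow> x c = 0)}"

definition coord_proj :: "(nat \<Rightarrow> nat) \<Rightarrow> nat \<Rightarrow> (nat \<Rightarrow> real) \<Rightarrow> (nat \<Rightarrow> real)" where
  "coord_proj \<sigma> n x = (\<lambda>c. if c \<in> \<sigma> ` {1..n} then x c else 0)"

definition overlap_exactly :: "nat \<Rightarrow> (nat \<Rightarrow> nat \<Rightarrow> real) \<Rightarrow> (nat \<Rightarrow> nat \<Rightarrow> real)
    \<Rightarrow> (nat \<Rightarrow> nat) \<Rightarrow> nat \<Rightarrow> nat \<Rightarrow> nat \<Rightarrow> bool" where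
  "overlap_exactly d a b \<sigma> n i j \<longleftrightarrow>
     (\<forall>x\<in>unit_cube d. coord_proj \<sigma> n (ifs_map d a b i x) = coord_proj \<sigma> n (ifs_map d a b j x))"

definition Iset :: "nat \<Rightarrow> nat \<Rightarrow> (nat \<Rightarrow> nat \<Rightarrow> real) \<Rightarrow> (nat \<Rightarrow> nat \<Rightarrow> real)
    \<Rightarrow> (nat \<Rightarrow> nat) \<Rightarrow> nat \<Rightarrow> nat set" where
  "Iset d N a b \<sigma> n = {i \<in> {1..N}. \<forall>j\<in>{1..N}. overlap_exactly d a b \<sigma> n j i \<longrightarrow> i \<le> j}"

definition Ldelta :: "(nat \<Rightarrow> nat \<Rightarrow> real) \<Rightarrow> (nat \<Rightarrow> nat) \<Rightarrow> real \<Rightarrow> nat \<Rightarrow> nat" where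
  "Ldelta a ii \<delta> c = (LEAST L. (\<Prod>l=1..L. lam a (ii l) c) \<le> \<delta>)"

definition class_A :: "nat \<Rightarrow> nat \<Rightarrow> (nat \<Rightarrow> nat \<Rightarrow> real) \<Rightarrow> (nat \<Rightarrow> nat) set" where
  "class_A d N a = {\<sigma>. \<sigma> permutes {1..d} \<and>
     (\<exists>ii \<delta>. (\<forall>l\<ge>1. ii l \<in> {1..N}) \<and> 0 < \<delta> \<and>
        (\<forall>n\<in>{2..d}. Ldelta a ii \<delta> (\<sigma> n) \<le> Ldelta a ii \<delta> (\<sigma> (n - 1)) \<and>
           (Ldelta a ii \<delta> (\<sigma> n) = Ldelta a ii \<delta> (\<sigma> (n - 1)) \<longrightarrow> \<sigma> (n - 1) < \<sigma> n)))}"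

definition prob_vec :: "nat set \<Rightarrow> (nat \<Rightarrow> real) \<Rightarrow> bool" where
  "prob_vec A p \<longleftrightarrow> (\<forall>i\<in>A. 0 \<le> p i) \<and> (\<Sum>i\<in>A. p i) = 1"

text \<open>P n stands for the paper's p_{sigma_n}, a probability vector on I_n^sigma.\<close>
definition prob_family :: "nat \<Rightarrow> nat \<Rightarrow> (nat \<Rightarrow> nat \<Rightarrow> real) \<Rightarrow> (nat \<Rightarrow> nat \<Rightarrow> real)
    \<Rightarrow> (nat \<Rightarrow> nat) \<Rightarrow> (nat \<Rightarrow> nat \<Rightarrow> real) \<Rightarrow> bool" where
  "prob_family d N a b \<sigma> P \<longleftrightarrow> (\<forall>n\<in>{1..d}. prob_vec (Iset d N a b \<sigma> n) (P n))"

definition chi :: "nat \<Rightarrow> nat \<Rightarrow> (nat \<Rightarrow> nat \<Rightarrow> real) \<Rightarrow> (nat \<Rightarrow> nat \<Rightarrow> real)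
    \<Rightarrow> (nat \<Rightarrow> nat) \<Rightarrow> nat \<Rightarrow> nat \<Rightarrow> (nat \<Rightarrow> real) \<Rightarrow> real" where
  "chi d N a b \<sigma> n m p = - (\<Sum>i\<in>Iset d N a b \<sigma> m. p i * ln (lam a i (\<sigma> n)))"

function Ccoef :: "nat \<Rightarrow> nat \<Rightarrow> (nat \<Rightarrow> nat \<Rightarrow> real) \<Rightarrow> (nat \<Rightarrow> nat \<Rightarrow> real)
    \<Rightarrow> (nat \<Rightarrow> nat) \<Rightarrow> (nat \<Rightarrow> nat \<Rightarrow> real) \<Rightarrow> nat \<Rightarrow> real" where
  "Ccoef d N a b \<sigma> P k =
     (if d \<le> k then 1 / chi d N a b \<sigma> d d (P d)
      else (1 - (\<Sum>m\<in>{k+1..d}. Ccoef d N a b \<sigma> P m * chi d N a b \<sigma> k m (P m)))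
           / chi d N a b \<sigma> k k (P k))"
  by pat_completeness auto
termination
  by (relation "measure (\<lambda>(d, N, a, b, \<sigma>, P, k). d - k)") auto

definition entropy :: "nat set \<Rightarrow> (nat \<Rightarrow> real) \<Rightarrow> real" where
  "entropy A p = - (\<Sum>i\<in>A. if p i = 0 then 0 else p i * ln (p i))"

definition integ :: "nat set \<Rightarrow> (nat \<Rightarrow> real) \<Rightarrow> (nat \<Rightarrow> real) \<Rightarrow> real" where
  "integ A f p = (\<Sum>i\<in>A. p i * f i)"

definition t_sigma :: "nat \<Rightarrow> nat \<Rightarrow> (nat \<Rightarrow> nat \<Rightarrow> real) \<Rightarrow> (nat \<Rightarrow> nat \<Rightarrow> real)
    \<Rightarrow> (nat \<Rightarrow> nat) \<Rightarrow> (nat \<Rightarrow> nat \<Rightarrow> real) \<Rightarrow> (nat \<Rightarrow> nat \<Rightarrow> real) \<Rightarrow> real" where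
  "t_sigma d N a b \<sigma> \<phi> P = (\<Sum>n=1..d. Ccoef d N a b \<sigma> P n *
      (entropy (Iset d N a b \<sigma> n) (P n) + integ (Iset d N a b \<sigma> n) (\<phi> n) (P n)))"

function Tpar :: "nat \<Rightarrow> nat \<Rightarrow> (nat \<Rightarrow> nat \<Rightarrow> real) \<Rightarrow> (nat \<Rightarrow> nat \<Rightarrow> real)
    \<Rightarrow> (nat \<Rightarrow> nat) \<Rightarrow> (nat \<Rightarrow> nat \<Rightarrow> real) \<Rightarrow> nat \<Rightarrow> real" where
  "Tpar d N a b \<sigma> \<phi> n =
     (if n = 0 then 0
      else THE t. (\<Sum>i\<in>Iset d N a b \<sigma> n. exp (\<phi> n i) *
             (\<Prod>l=1..n-1. lam a i (\<sigma> l) powr (Tpar d N a b \<sigma> \<phi> l - Tpar d N a b \<sigma> \<phi> (l - 1)))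
             * lam a i (\<sigma> n) powr (t - Tpar d N a b \<sigma> \<phi> (n - 1))) = 1)"
  by pat_completeness auto
termination
  by (relation "measure (\<lambda>(d, N, a, b, \<sigma>, \<phi>, n). n)") auto

definition pstar :: "nat \<Rightarrow> nat \<Rightarrow> (nat \<Rightarrow> nat \<Rightarrow> real) \<Rightarrow> (nat \<Rightarrow> nat \<Rightarrow> real)
    \<Rightarrow> (nat \<Rightarrow> nat) \<Rightarrow> (nat \<Rightarrow> nat \<Rightarrow> real) \<Rightarrow> nat \<Rightarrow> nat \<Rightarrow> real" where
  "pstar d N a b \<sigma> \<phi> n i = exp (\<phi> n i) *
     (\<Prod>l=1..n. lam a i (\<sigma> l) powr (Tpar d N a b \<sigma> \<phi> l - Tpar d N a b \<sigma> \<phi> (l - 1)))"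

end

theory Submission
  imports Defs
begin

declare Tpar.simps[simp del] Ccoef.simps[simp del]

lemma powr_le_exp_bound:
  fixes l s A :: real
  assumes "0 < l" "l < 1" "A \<le> - ln l" "0 \<le> s"
  shows "l powr s \<le> exp (- (s * A))"
proof -
  have "l powr s = exp (s * ln l)" using assms by (simp add: powr_def)
  moreover have "s * ln l \<le> - s * A" using assms mult_left_mono[of A "- ln l" s] by simp
  ultimately show ?thesis by simp
qed

lemma powr_ge_exp_bound:
  fixes l s A :: real
  assumes "0 < l" "l < 1" "A \<le> - ln l" "s \<le> 0"
  shows "exp (- (s * A)) \<le> l powr s"
proof -
  have "l powr s = exp (s * ln l)" using assms by (simp add: powr_def)
  moreover have "- s * A \<le> s * ln l" using assms mult_left_mono[of A "- ln l" "-s"] by simp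
  ultimately show ?thesis by simp
qed

lemma unique_root:
  fixes I :: "nat set" and c l :: "nat \<Rightarrow> real" and T0 :: real
  assumes fin: "finite I" and ne: "I \<noteq> {}"
    and cpos: "\<forall>i\<in>I. 0 < c i" and lpos: "\<forall>i\<in>I. 0 < l i \<and> l i < 1"
  shows "\<exists>!t. (\<Sum>i\<in>I. c i * l i powr (t - T0)) = 1"
proof -
  define F where "F t = (\<Sum>i\<in>I. c i * l i powr (t - T0))" for t
  define A where "A = Min ((\<lambda>i. - ln (l i)) ` I)"
  define S where "S = (\<Sum>i\<in>I. c i)"
  have Apos: "0 < A" unfolding A_def using fin ne lpos by (subst Min_gr_iff) auto
  have Ale: "\<And>i. i \<in> I \<Longrightarrow> A \<le> - ln (l i)" unfolding A_def using fin by simp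
  have Spos: "0 < S" unfolding S_def using fin ne cpos by (simp add: sum_pos)
  have F0: "F T0 = S" unfolding F_def S_def using lpos by (intro sum.cong) auto
  have cont: "continuous_on UNIV F" unfolding F_def using lpos
    by (intro continuous_intros) auto
  have mono: "F t' < F t" if "t < t'" for t t'
    unfolding F_def using ne fin
    by (intro sum_strict_mono) (use cpos lpos that powr_less_mono' in auto)
  define s where "s = ln S / A"
  have sA: "s * A = ln S" unfolding s_def using Apos by simp
  have ex: "\<exists>t. F t = 1"
  proof (cases "0 \<le> s")
    case True
    have "F (T0 + s) \<le> (\<Sum>i\<in>I. c i * exp (- (s * A)))" unfolding F_def
      by (intro sum_mono mult_left_mono powr_le_exp_bound) (use cpos lpos Ale True in \<open>auto intro!: powr_le_exp_bound\<close>)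
    also have "\<dots> = S * exp (- ln S)" using sA by (simp add: sum_distrib_right S_def)
    also have "\<dots> = 1" using Spos by (simp add: exp_minus)
    finally have "F (T0 + s) \<le> 1" .
    moreover have "1 \<le> F T0" using F0 True Spos s_def Apos
      by (simp add: zero_le_divide_iff) 
    ultimately show ?thesis using IVT2'[of F "T0 + s" 1 T0] True continuous_on_subset[OF cont]
      by auto
  next
    case False
    have "(\<Sum>i\<in>I. c i * exp (- (s * A))) \<le> F (T0 + s)" unfolding F_def
      by (intro sum_mono mult_left_mono powr_ge_exp_bound) (use cpos lpos Ale False in \<open>auto intro!: powr_ge_exp_bound\<close>)
    moreover have "(\<Sum>i\<in>I. c i * exp (- (s * A))) = S * exp (- ln S)" using sA by (simp add: sum_distrib_right S_def)
    moreover have "S * exp (- ln S) = 1" using Spos by (simp add: exp_minus)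
    ultimately have "1 \<le> F (T0 + s)" by simp
    moreover have "F T0 \<le> 1" using F0 False Spos s_def Apos
      by (simp add: zero_le_divide_iff) 
    ultimately show ?thesis using IVT2'[of F T0 1 "T0 + s"] False continuous_on_subset[OF cont]
      by auto
  qed
  moreover have "t = t'" if "F t = 1" "F t' = 1" for t t'
    using mono[of t t'] mono[of t' t] that by (cases t t' rule: linorder_cases) auto
  ultimately show ?thesis unfolding F_def by blast
qed

lemma triangle_swap:
  fixes f :: "nat \<Rightarrow> nat \<Rightarrow> real"
  shows "(\<Sum>k=1..n. \<Sum>l=1..k. f k l) = (\<Sum>l=1..n. \<Sum>k=l..n. f k l)"
proof (induction n)
  case 0 then show ?case by simp
next
  case (Suc n)
  have "(\<Sum>l=1..Suc n. \<Sum>k=l..Suc n. f k l) = (\<Sum>l=1..n. \<Sum>k=l..Suc n. f k l) + f (Suc n) (Suc n)"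
    by simp
  also have "(\<Sum>l=1..n. \<Sum>k=l..Suc n. f k l) = (\<Sum>l=1..n. (\<Sum>k=l..n. f k l) + f (Suc n) l)"
    by (intro sum.cong) auto
  finally show ?case using Suc by (simp add: sum.distrib)
qed

lemma telescope1:
  fixes T :: "nat \<Rightarrow> real"
  shows "(\<Sum>l=1..n. T l - T (l - 1)) = T n - T 0"
  by (induction n) auto

context
  fixes d N :: nat and a b \<phi> :: "nat \<Rightarrow> nat \<Rightarrow> real" and \<sigma> :: "nat \<Rightarrow> nat"
  assumes d1: "1 \<le> d"
    and lamc: "\<forall>i\<in>{1..N}. \<forall>c\<in>{1..d}. 0 < lam a i c \<and> lam a i c < 1"
    and perm: "\<sigma> permutes {1..d}"
begin

lemma I_sub: "Iset d N a b \<sigma> k \<subseteq> {1..N}"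
  unfolding Iset_def by auto

lemma I_fin: "finite (Iset d N a b \<sigma> k)"
  using I_sub finite_subset by blast

lemma lam_bd: "i \<in> Iset d N a b \<sigma> k \<Longrightarrow> l \<in> {1..d} \<Longrightarrow> 0 < lam a i (\<sigma> l) \<and> lam a i (\<sigma> l) < 1"
  using lamc I_sub permutes_in_image[OF perm, of l] by blast

lemma chi_pos:
  assumes l: "l \<in> {1..d}" and p: "prob_vec (Iset d N a b \<sigma> l) p"
  shows "0 < chi d N a b \<sigma> l l p"
proof (rule ccontr)
  assume "\<not> 0 < chi d N a b \<sigma> l l p"
  then have le: "(\<Sum>i\<in>Iset d N a b \<sigma> l. p i * (- ln (lam a i (\<sigma> l)))) \<le> 0"
    unfolding chi_def by (simp add: sum_negf)
  have nn: "\<And>i. i \<in> Iset d N a b \<sigma> l \<Longrightarrow> 0 \<le> p i * (- ln (lam a i (\<sigma> l)))"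
  proof -
    fix i assume i: "i \<in> Iset d N a b \<sigma> l"
    have "0 \<le> p i" using p i unfolding prob_vec_def by blast
    moreover have "ln (lam a i (\<sigma> l)) \<le> 0" using lam_bd[OF i l] by simp
    ultimately show "0 \<le> p i * (- ln (lam a i (\<sigma> l)))" by (simp add: mult_nonneg_nonpos)
  qed
  have "(\<Sum>i\<in>Iset d N a b \<sigma> l. p i * (- ln (lam a i (\<sigma> l)))) = 0"
    using le sum_nonneg[of "Iset d N a b \<sigma> l" "\<lambda>i. p i * (- ln (lam a i (\<sigma> l)))", OF nn] by linarith
  then have "\<forall>i\<in>Iset d N a b \<sigma> l. p i * (- ln (lam a i (\<sigma> l))) = 0"
    by (subst (asm) sum_nonneg_eq_0_iff) (use I_fin nn in auto)
  moreover have "\<And>i. i \<in> Iset d N a b \<sigma> l \<Longrightarrow> ln (lam a i (\<sigma> l)) < 0"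
    using lam_bd[OF _ l] by simp
  ultimately have "\<forall>i\<in>Iset d N a b \<sigma> l. p i = 0" by fastforce
  then show False using p unfolding prob_vec_def by simp
qed

lemma Ccong:
  assumes "k \<le> d" "\<forall>m\<in>{k..d}. P m = Q m"
  shows "Ccoef d N a b \<sigma> P k = Ccoef d N a b \<sigma> Q k"
  using assms
proof (induction "d - k" arbitrary: k rule: less_induct)
  case less
  show ?case
  proof (cases "d \<le> k")
    case True
    then have "k = d" using less.prems by simp
    then show ?thesis using less.prems True by (subst (1 2) Ccoef.simps) simp
  next
    case False
    have "(\<Sum>m\<in>{k+1..d}. Ccoef d N a b \<sigma> P m * chi d N a b \<sigma> k m (P m)) =
          (\<Sum>m\<in>{k+1..d}. Ccoef d N a b \<sigma> Q m * chi d N a b \<sigma> k m (Q m))"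
      by (intro sum.cong refl; subst less.hyps) (use less.prems False in auto)
    then show ?thesis using False less.prems by (subst (1 2) Ccoef.simps) simp
  qed
qed

lemma Csum:
  assumes Q: "\<forall>k\<in>{1..d}. prob_vec (Iset d N a b \<sigma> k) (Q k)" and l: "l \<in> {1..d}"
  shows "(\<Sum>k=l..d. Ccoef d N a b \<sigma> Q k * chi d N a b \<sigma> l k (Q k)) = 1"
proof -
  have cp: "chi d N a b \<sigma> l l (Q l) \<noteq> 0" using chi_pos[OF l] Q l by fastforce
  show ?thesis
  proof (cases "d \<le> l")
    case True
    then have "l = d" using l by simp
    then show ?thesis using cp by (subst Ccoef.simps) simp
  next
    case False
    have "Ccoef d N a b \<sigma> Q l * chi d N a b \<sigma> l l (Q l) =
       1 - (\<Sum>m\<in>{l+1..d}. Ccoef d N a b \<sigma> Q m * chi d N a b \<sigma> l m (Q m))"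
      using False cp by (subst Ccoef.simps) simp
    then show ?thesis using False by (subst sum.atLeast_Suc_atMost) auto
  qed
qed


lemma pstar_split:
  assumes k: "1 \<le> k"
  shows "pstar d N a b \<sigma> \<phi> k i = (exp (\<phi> k i) *
      (\<Prod>l=1..k-1. lam a i (\<sigma> l) powr (Tpar d N a b \<sigma> \<phi> l - Tpar d N a b \<sigma> \<phi> (l - 1))))
      * lam a i (\<sigma> k) powr (Tpar d N a b \<sigma> \<phi> k - Tpar d N a b \<sigma> \<phi> (k - 1))"
proof -
  obtain j where j: "k = Suc j" using k by (cases k) auto
  show ?thesis unfolding pstar_def j by (simp add: prod.cl_ivl_Suc mult.assoc)
qed

lemma pstar_prop:
  assumes k: "k \<in> {1..d}" and ne: "Iset d N a b \<sigma> k \<noteq> {}"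
  shows "(\<Sum>i\<in>Iset d N a b \<sigma> k. pstar d N a b \<sigma> \<phi> k i) = 1 \<and>
         (\<forall>i\<in>Iset d N a b \<sigma> k. 0 < pstar d N a b \<sigma> \<phi> k i)"
proof -
  define c where "c i = exp (\<phi> k i) *
      (\<Prod>l=1..k-1. lam a i (\<sigma> l) powr (Tpar d N a b \<sigma> \<phi> l - Tpar d N a b \<sigma> \<phi> (l - 1)))" for i
  have cpos: "\<forall>i\<in>Iset d N a b \<sigma> k. 0 < c i"
  proof
    fix i assume i: "i \<in> Iset d N a b \<sigma> k"
    have H: "0 < lam a i (\<sigma> l) powr (Tpar d N a b \<sigma> \<phi> l - Tpar d N a b \<sigma> \<phi> (l - 1))"
      if "l \<in> {1..k-1}" for l
    proof -
      have "l \<in> {1..d}" using that k by auto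
      then show ?thesis using lam_bd[OF i, of l] by simp
    qed
    have "0 < (\<Prod>l=1..k-1. lam a i (\<sigma> l) powr (Tpar d N a b \<sigma> \<phi> l - Tpar d N a b \<sigma> \<phi> (l - 1)))"
      by (intro prod_pos ballI H)
    then show "0 < c i" unfolding c_def by simp
  qed
  have lb: "\<forall>i\<in>Iset d N a b \<sigma> k. 0 < lam a i (\<sigma> k) \<and> lam a i (\<sigma> k) < 1"
    using lam_bd k by blast
  have Tk: "Tpar d N a b \<sigma> \<phi> k = (THE t. (\<Sum>i\<in>Iset d N a b \<sigma> k. c i * lam a i (\<sigma> k) powr (t - Tpar d N a b \<sigma> \<phi> (k - 1))) = 1)"
    using k by (subst Tpar.simps) (simp add: c_def)
  have "\<exists>!t. (\<Sum>i\<in>Iset d N a b \<sigma> k. c i * lam a i (\<sigma> k) powr (t - Tpar d N a b \<sigma> \<phi> (k - 1))) = 1"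
    by (rule unique_root[OF I_fin ne cpos lb])
  from theI'[OF this] have eq: "(\<Sum>i\<in>Iset d N a b \<sigma> k. c i * lam a i (\<sigma> k) powr (Tpar d N a b \<sigma> \<phi> k - Tpar d N a b \<sigma> \<phi> (k - 1))) = 1"
    unfolding Tk[symmetric] .
  have ps: "pstar d N a b \<sigma> \<phi> k i = c i * lam a i (\<sigma> k) powr (Tpar d N a b \<sigma> \<phi> k - Tpar d N a b \<sigma> \<phi> (k - 1))" for i
    using pstar_split[of k i] k unfolding c_def by simp
  show ?thesis using eq cpos lb by (auto simp: ps intro!: mult_pos_pos)
qed

lemma ln_pstar:
  assumes k: "k \<in> {1..d}" and i: "i \<in> Iset d N a b \<sigma> k"
  shows "ln (pstar d N a b \<sigma> \<phi> k i) = \<phi> k i +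
     (\<Sum>l=1..k. (Tpar d N a b \<sigma> \<phi> l - Tpar d N a b \<sigma> \<phi> (l - 1)) * ln (lam a i (\<sigma> l)))"
proof -
  have H: "0 < lam a i (\<sigma> l) powr (Tpar d N a b \<sigma> \<phi> l - Tpar d N a b \<sigma> \<phi> (l - 1))"
    if "l \<in> {1..k}" for l
  proof -
    have "l \<in> {1..d}" using that k by auto
    then show ?thesis using lam_bd[OF i, of l] by simp
  qed
  have pp: "0 < (\<Prod>l=1..k. lam a i (\<sigma> l) powr (Tpar d N a b \<sigma> \<phi> l - Tpar d N a b \<sigma> \<phi> (l - 1)))"
    by (intro prod_pos ballI H)
  have lp: "ln (\<Prod>l=1..k. lam a i (\<sigma> l) powr (Tpar d N a b \<sigma> \<phi> l - Tpar d N a b \<sigma> \<phi> (l - 1)))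
     = (\<Sum>l=1..k. ln (lam a i (\<sigma> l) powr (Tpar d N a b \<sigma> \<phi> l - Tpar d N a b \<sigma> \<phi> (l - 1))))"
    by (rule ln_prod) (use H in force)+
  show ?thesis unfolding pstar_def
    by (subst ln_mult_pos[OF exp_gt_zero pp], subst lp) (simp add: ln_powr)
qed

lemma EH_pstar:
  assumes k: "k \<in> {1..d}" and ne: "Iset d N a b \<sigma> k \<noteq> {}"
  shows "entropy (Iset d N a b \<sigma> k) (pstar d N a b \<sigma> \<phi> k) + integ (Iset d N a b \<sigma> k) (\<phi> k) (pstar d N a b \<sigma> \<phi> k)
     = (\<Sum>l=1..k. chi d N a b \<sigma> l k (pstar d N a b \<sigma> \<phi> k) * (Tpar d N a b \<sigma> \<phi> l - Tpar d N a b \<sigma> \<phi> (l - 1)))"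
proof -
  let ?I = "Iset d N a b \<sigma> k" and ?p = "pstar d N a b \<sigma> \<phi> k"
  let ?D = "\<lambda>l. Tpar d N a b \<sigma> \<phi> l - Tpar d N a b \<sigma> \<phi> (l - 1)"
  have pos: "\<forall>i\<in>?I. 0 < ?p i" using pstar_prop[OF k ne] by blast
  have "entropy ?I ?p + integ ?I (\<phi> k) ?p = (\<Sum>i\<in>?I. ?p i * (\<phi> k i - ln (?p i)))"
  proof -
    have "entropy ?I ?p = - (\<Sum>i\<in>?I. ?p i * ln (?p i))"
      unfolding entropy_def using pos by (intro arg_cong[where f=uminus] sum.cong) auto
    then show ?thesis unfolding integ_def
      by (simp add: sum_subtractf[symmetric] algebra_simps)
  qed
  also have "\<dots> = (\<Sum>i\<in>?I. \<Sum>l=1..k. - (?p i * ln (lam a i (\<sigma> l))) * ?D l)"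
  proof (intro sum.cong refl)
    fix x assume x: "x \<in> ?I"
    have "?p x * (\<phi> k x - ln (?p x)) = - (\<Sum>l=1..k. ?p x * (?D l * ln (lam a x (\<sigma> l))))"
      by (simp add: ln_pstar[OF k x] sum_distrib_left)
    also have "\<dots> = (\<Sum>l=1..k. - (?p x * ln (lam a x (\<sigma> l))) * ?D l)"
      by (simp add: sum_negf[symmetric] mult_ac)
    finally show "?p x * (\<phi> k x - ln (?p x)) = (\<Sum>l=1..k. - (?p x * ln (lam a x (\<sigma> l))) * ?D l)" .
  qed
  also have "\<dots> = (\<Sum>l=1..k. \<Sum>i\<in>?I. - (?p i * ln (lam a i (\<sigma> l))) * ?D l)"
    by (rule sum.swap)
  also have "\<dots> = (\<Sum>l=1..k. chi d N a b \<sigma> l k ?p * ?D l)"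
    unfolding chi_def by (simp add: sum_distrib_right sum_negf)
  finally show ?thesis .
qed


lemma split_ivl:
  fixes g :: "nat \<Rightarrow> real"
  assumes "m \<le> n + 1" "n \<le> d"
  shows "(\<Sum>k=m..d. g k) = (\<Sum>k=m..n. g k) + (\<Sum>k=n+1..d. g k)"
proof -
  have "d = n + (d - n)" using assms by simp
  then show ?thesis using sum.ub_add_nat[OF assms(1), of g "d - n"] by simp
qed

lemma main_gen:
  assumes PF: "prob_family d N a b \<sigma> P" and n: "n \<le> d"
  shows "t_sigma d N a b \<sigma> \<phi> (\<lambda>k. if k \<le> n then pstar d N a b \<sigma> \<phi> k else P k)
           = Tpar d N a b \<sigma> \<phi> n +
             (\<Sum>k=n+1..d. Ccoef d N a b \<sigma> P k *
                (entropy (Iset d N a b \<sigma> k) (P k) + integ (Iset d N a b \<sigma> k) (\<phi> k) (P k)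
                 - (\<Sum>l=1..n. chi d N a b \<sigma> l k (P k) *
                      (Tpar d N a b \<sigma> \<phi> l - Tpar d N a b \<sigma> \<phi> (l - 1)))))"
proof -
  let ?P' = "\<lambda>k. if k \<le> n then pstar d N a b \<sigma> \<phi> k else P k"
  let ?I = "Iset d N a b \<sigma>" and ?T = "Tpar d N a b \<sigma> \<phi>"
  let ?C = "Ccoef d N a b \<sigma>" and ?chi = "chi d N a b \<sigma>"
  let ?D = "\<lambda>l. ?T l - ?T (l - 1)"
  let ?E = "\<lambda>k p. entropy (?I k) p + integ (?I k) (\<phi> k) p"
  have ne: "?I k \<noteq> {}" if "k \<in> {1..d}" for k
  proof
    assume "?I k = {}"
    moreover have "sum (P k) (?I k) = 1" using PF that unfolding prob_family_def prob_vec_def by blast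
    ultimately show False by simp
  qed
  have PF': "\<forall>k\<in>{1..d}. prob_vec (?I k) (?P' k)"
  proof
    fix k assume k: "k \<in> {1..d}"
    show "prob_vec (?I k) (?P' k)"
    proof (cases "k \<le> n")
      case True
      then show ?thesis using pstar_prop[OF k ne[OF k]] unfolding prob_vec_def by auto
    next
      case False
      then show ?thesis using PF k unfolding prob_family_def by auto
    qed
  qed
  have Ceq: "?C ?P' k = ?C P k" if "k \<in> {n+1..d}" for k
    by (rule Ccong) (use that in auto)
  have "t_sigma d N a b \<sigma> \<phi> ?P' = (\<Sum>k=1..n. ?C ?P' k * ?E k (?P' k)) + (\<Sum>k=n+1..d. ?C ?P' k * ?E k (?P' k))"
    unfolding t_sigma_def by (rule split_ivl) (use n in auto)
  also have "(\<Sum>k=n+1..d. ?C ?P' k * ?E k (?P' k)) = (\<Sum>k=n+1..d. ?C P k * ?E k (P k))"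
    by (intro sum.cong refl) (simp add: Ceq)
  also have "(\<Sum>k=1..n. ?C ?P' k * ?E k (?P' k)) = (\<Sum>k=1..n. \<Sum>l=1..k. ?C ?P' k * ?chi l k (?P' k) * ?D l)"
  proof (intro sum.cong refl)
    fix k assume k: "k \<in> {1..n}"
    then have kd: "k \<in> {1..d}" using n by auto
    have "?E k (?P' k) = (\<Sum>l=1..k. ?chi l k (?P' k) * ?D l)"
      using EH_pstar[OF kd ne[OF kd]] k by simp
    then show "?C ?P' k * ?E k (?P' k) = (\<Sum>l=1..k. ?C ?P' k * ?chi l k (?P' k) * ?D l)"
      by (simp add: sum_distrib_left mult.assoc)
  qed
  also have "\<dots> = (\<Sum>l=1..n. \<Sum>k=l..n. ?C ?P' k * ?chi l k (?P' k) * ?D l)"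
    by (rule triangle_swap)
  also have "\<dots> = (\<Sum>l=1..n. ?D l * (1 - (\<Sum>k=n+1..d. ?C P k * ?chi l k (P k))))"
  proof (intro sum.cong refl)
    fix l assume l: "l \<in> {1..n}"
    then have ld: "l \<in> {1..d}" using n by auto
    have "1 = (\<Sum>k=l..d. ?C ?P' k * ?chi l k (?P' k))" using Csum[OF PF' ld] by simp
    also have "\<dots> = (\<Sum>k=l..n. ?C ?P' k * ?chi l k (?P' k)) + (\<Sum>k=n+1..d. ?C ?P' k * ?chi l k (?P' k))"
      by (rule split_ivl) (use l n in auto)
    also have "(\<Sum>k=n+1..d. ?C ?P' k * ?chi l k (?P' k)) = (\<Sum>k=n+1..d. ?C P k * ?chi l k (P k))"
      by (intro sum.cong refl) (simp add: Ceq)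
    finally have eqs: "(\<Sum>k=l..n. ?C ?P' k * ?chi l k (?P' k)) = 1 - (\<Sum>k=n+1..d. ?C P k * ?chi l k (P k))"
      by simp
    show "(\<Sum>k=l..n. ?C ?P' k * ?chi l k (?P' k) * ?D l) = ?D l * (1 - (\<Sum>k=n+1..d. ?C P k * ?chi l k (P k)))"
      by (subst sum_distrib_right[symmetric], subst eqs, rule mult.commute)
  qed
  also have "\<dots> = (\<Sum>l=1..n. ?D l) - (\<Sum>l=1..n. \<Sum>k=n+1..d. ?C P k * ?chi l k (P k) * ?D l)"
    by (simp add: right_diff_distrib sum_subtractf sum_distrib_left mult_ac)
  also have "(\<Sum>l=1..n. ?D l) = ?T n"
    using telescope1[of ?T n] by (simp add: Tpar.simps[of _ _ _ _ _ _ 0])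
  also have "(\<Sum>l=1..n. \<Sum>k=n+1..d. ?C P k * ?chi l k (P k) * ?D l)
     = (\<Sum>k=n+1..d. ?C P k * (\<Sum>l=1..n. ?chi l k (P k) * ?D l))"
    by (subst sum.swap) (simp add: sum_distrib_left mult_ac)
  finally show ?thesis
    by (simp add: right_diff_distrib sum_subtractf)
qed

end

theorem lemma5p2:
  fixes d N :: nat and a b \<phi> P :: "nat \<Rightarrow> nat \<Rightarrow> real" and \<sigma> :: "nat \<Rightarrow> nat"
  assumes "1 \<le> d"
    and "\<forall>i\<in>{1..N}. \<forall>c\<in>{1..d}. 0 < lam a i c \<and> lam a i c < 1"
    and "\<forall>i\<in>{1..N}. \<forall>j\<in>{1..N}. i \<noteq> j \<longrightarrow>
           (\<exists>x\<in>unit_cube d. ifs_map d a b i x \<noteq> ifs_map d a b j x)"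
    and "\<sigma> \<in> class_A d N a"
    and "prob_family d N a b \<sigma> P"
  shows "(\<forall>n\<in>{1..d-1}.
           t_sigma d N a b \<sigma> \<phi> (\<lambda>k. if k \<le> n then pstar d N a b \<sigma> \<phi> k else P k)
           = Tpar d N a b \<sigma> \<phi> n +
             (\<Sum>k=n+1..d. Ccoef d N a b \<sigma> P k *
                (entropy (Iset d N a b \<sigma> k) (P k) + integ (Iset d N a b \<sigma> k) (\<phi> k) (P k)
                 - (\<Sum>l=1..n. chi d N a b \<sigma> l k (P k) *
                      (Tpar d N a b \<sigma> \<phi> l - Tpar d N a b \<sigma> \<phi> (l - 1))))))
         \<and> t_sigma d N a b \<sigma> \<phi> (pstar d N a b \<sigma> \<phi>) = Tpar d N a b \<sigma> \<phi> d"
  proof -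
  have perm: "\<sigma> permutes {1..d}" using assms(4) unfolding class_A_def by blast
  note mg = main_gen[OF assms(1) assms(2) perm assms(5)]
  have A: "\<forall>n\<in>{1..d-1}.
           t_sigma d N a b \<sigma> \<phi> (\<lambda>k. if k \<le> n then pstar d N a b \<sigma> \<phi> k else P k)
           = Tpar d N a b \<sigma> \<phi> n +
             (\<Sum>k=n+1..d. Ccoef d N a b \<sigma> P k *
                (entropy (Iset d N a b \<sigma> k) (P k) + integ (Iset d N a b \<sigma> k) (\<phi> k) (P k)
                 - (\<Sum>l=1..n. chi d N a b \<sigma> l k (P k) *
                      (Tpar d N a b \<sigma> \<phi> l - Tpar d N a b \<sigma> \<phi> (l - 1)))))"
    using mg by auto
  let ?P' = "\<lambda>k. if k \<le> d then pstar d N a b \<sigma> \<phi> k else P k"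
  have "t_sigma d N a b \<sigma> \<phi> (pstar d N a b \<sigma> \<phi>) = t_sigma d N a b \<sigma> \<phi> ?P'"
    unfolding t_sigma_def
  proof (intro sum.cong refl)
    fix k assume k: "k \<in> {1..d}"
    have "Ccoef d N a b \<sigma> (pstar d N a b \<sigma> \<phi>) k = Ccoef d N a b \<sigma> ?P' k"
      by (rule Ccong[OF assms(1) assms(2) perm]) (use k in auto)
    then show "Ccoef d N a b \<sigma> (pstar d N a b \<sigma> \<phi>) k *
         (entropy (Iset d N a b \<sigma> k) (pstar d N a b \<sigma> \<phi> k) + integ (Iset d N a b \<sigma> k) (\<phi> k) (pstar d N a b \<sigma> \<phi> k)) =
         Ccoef d N a b \<sigma> ?P' k *
         (entropy (Iset d N a b \<sigma> k) (?P' k) + integ (Iset d N a b \<sigma> k) (\<phi> k) (?P' k))"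
      using k by simp
  qed
  also have "\<dots> = Tpar d N a b \<sigma> \<phi> d" using mg[of d] by simp
  finally show ?thesis using A by blast
qed

end
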